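(* Let $\lambda \geq 0$, $0\leq \beta<1$, $\tau \in \mathbb{C}\setminus\{0\}$ and $m \in \mathbb{N}$. Let $f(z)=z+\sum_{k=1}^{\infty} a_{mk+1}z^{mk+1}$ belong to $\Theta_{\Sigma_m}(\tau,\lambda,0,0;\beta)$ (the case $\gamma=\delta=0$). Then $$|a_{m+1}| \leq \min\left\{\frac{2|\tau|(1-\beta)}{1+m\lambda},\ 2\sqrt{\frac{|\tau|(1-\beta)}{(m+1)(1+2m\lambda)}}\right\}\quad\text{and}\quad |a_{2m+1}| \leq \frac{2|\tau|(1-\beta)}{1+2m\lambda}.$$
   Context: Let $\mathbb{U}=\{z\in\mathbb{C}:|z|<1\}$ and $m\in\mathbb{N}$. $\mathcal{A}_m$ denotes the class of functions analytic in $\mathbb{U}$ of the form $f(z)=z+\sum_{k=1}^{\infty}a_{mk+1}z^{mk+1}$. $\Sigma_m$ denotes the class of $m$-fold symmetric bi-univalent functions: functions $f\in\mathcal{A}_m$ univalent in $\mathbb{U}$ whose inverse $f^{-1}$ extends to a univalent function $g$ on $\mathbb{U}$; this $g$ has the expansion $g(w)=w-a_{m+1}w^{m+1}+\left[(m+1)a_{m+1}^2-a_{2m+1}\right]w^{2m+1}-\cdots$. For $\delta\in\mathbb{N}_0$ and $h(z)=z+\sum_{k\ge1}c_{mk+1}z^{mk+1}$ analytic in $\mathbb{U}$, the $m$-fold Ruscheweyh derivative is $\mathcal{R}^\delta h(z)=z+\sum_{k=1}^{\infty}\frac{\Gamma(\delta+k+1)}{\Gamma(k+1)\Gamma(\delta+1)}c_{mk+1}z^{mk+1}$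 (for $\delta=0$ it is the identity). For such $h$ and parameters $\lambda,\gamma,\tau\neq0,\delta$, put $$J_h(z)=1+\frac{1}{\tau}\Big[(1-\lambda)(1-\gamma)\frac{\mathcal{R}^\delta h(z)}{z}+(\lambda(\gamma+1)+\gamma)(\mathcal{R}^\delta h)'(z)+\lambda\gamma\big(z(\mathcal{R}^\delta h)''(z)-2\big)-1\Big].$$ For $0\le\beta<1$, $\Theta_{\Sigma_m}(\tau,\lambda,\gamma,\delta;\beta)$ is the set of $f\in\Sigma_m$ such that $\operatorname{Re}J_f(z)>\beta$ for all $z\in\mathbb{U}$ and $\operatorname{Re}J_g(w)>\beta$ for all $w\in\mathbb{U}$, where $g$ is the extension of $f^{-1}$ to $\mathbb{U}$. *)

theory Defs
  imports "HOL-Complex_Analysis.Complex_Analysis"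
begin

definition coef :: "(complex \<Rightarrow> complex) \<Rightarrow> nat \<Rightarrow> complex" where
  "coef h n = (deriv ^^ n) h 0 / of_nat (fact n)"

definition in_A :: "nat \<Rightarrow> (complex \<Rightarrow> complex) \<Rightarrow> bool" where
  "in_A m f \<longleftrightarrow> f holomorphic_on ball 0 1 \<and> coef f 0 = 0 \<and> coef f 1 = 1 \<and>
     (\<forall>n. n \<noteq> 1 \<and> \<not> (\<exists>k\<ge>1. n = m * k + 1) \<longrightarrow> coef f n = 0)"

definition inv_extension :: "(complex \<Rightarrow> complex) \<Rightarrow> (complex \<Rightarrow> complex) \<Rightarrow> bool" where
  "inv_extension f g \<longleftrightarrow> g holomorphic_on ball 0 1 \<and> inj_on g (ball 0 1) \<and>
     (\<forall>z\<in>ball 0 1. f z \<in> ball 0 1 \<longrightarrow> g (f z) = z)"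

definition Sigma_m :: "nat \<Rightarrow> (complex \<Rightarrow> complex) \<Rightarrow> bool" where
  "Sigma_m m f \<longleftrightarrow> in_A m f \<and> inj_on f (ball 0 1) \<and> (\<exists>g. inv_extension f g)"

text \<open>m-fold Ruscheweyh derivative (Gamma ratio = binomial coefficient for delta in N_0).\<close>
definition ruscheweyh :: "nat \<Rightarrow> nat \<Rightarrow> (complex \<Rightarrow> complex) \<Rightarrow> complex \<Rightarrow> complex" where
  "ruscheweyh m \<delta> h z = z + (\<Sum>k. of_nat ((\<delta> + Suc k) choose (Suc k)) * coef h (m * Suc k + 1)
        * z ^ (m * Suc k + 1))"

text \<open>The functional J_h; R h(z)/z is read as its removable value 1 at z = 0.\<close>
definition J_fun :: "nat \<Rightarrow> complex \<Rightarrow> real \<Rightarrow> real \<Rightarrow> nat \<Rightarrow> (complex \<Rightarrow> complex) \<Rightarrow> complex \<Rightarrow> complex" where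
  "J_fun m \<tau> lam \<gamma> \<delta> h z =
     (let R = ruscheweyh m \<delta> h in
      1 + (1 / \<tau>) * ((1 - of_real lam) * (1 - of_real \<gamma>) * (if z = 0 then 1 else R z / z)
        + (of_real lam * (of_real \<gamma> + 1) + of_real \<gamma>) * deriv R z
        + of_real lam * of_real \<gamma> * (z * deriv (deriv R) z - 2) - 1))"

definition Theta_Sigma :: "nat \<Rightarrow> complex \<Rightarrow> real \<Rightarrow> real \<Rightarrow> nat \<Rightarrow> real \<Rightarrow> (complex \<Rightarrow> complex) \<Rightarrow> bool" where
  "Theta_Sigma m \<tau> lam \<gamma> \<delta> \<beta> f \<longleftrightarrow> Sigma_m m f \<and>
     (\<forall>z\<in>ball 0 1. Re (J_fun m \<tau> lam \<gamma> \<delta> f z) > \<beta>) \<and>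
     (\<exists>g. inv_extension f g \<and> (\<forall>w\<in>ball 0 1. Re (J_fun m \<tau> lam \<gamma> \<delta> g w) > \<beta>))"

end

theory Submission
  imports Defs
begin


lemma cara_r:
  fixes p :: "complex \<Rightarrow> complex"
  assumes hol: "p holomorphic_on ball 0 1" and pos: "\<forall>z\<in>ball 0 1. Re (p z) > 0"
    and n: "n \<ge> 1" and r: "0 < r" "r < 1"
  shows "cmod ((deriv ^^ n) p 0 / fact n) * r^n \<le> 2 * Re (p 0)"
proof -
  define c where "c = (deriv ^^ n) p 0 / fact n"
  define P where "P t = p (r * cis t)" for t
  have sub: "cball 0 r \<subseteq> ball (0::complex) 1" using r by auto
  have cont: "continuous_on (cball 0 r) p"
    using hol holomorphic_on_imp_continuous_on continuous_on_subset sub by blast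
  have holr: "p holomorphic_on ball 0 r" by (rule holomorphic_on_subset[OF hol]) (use r in auto)
  have c0: "0 \<in> ball (0::complex) r" using r by simp
  have A: "((\<lambda>u. p u / (u - 0) ^ Suc n) has_contour_integral ((2 * pi * \<i>) / fact n * (deriv ^^ n) p 0)) (circlepath 0 r)"
    by (rule Cauchy_has_contour_integral_higher_derivative_circlepath[OF cont holr c0])
  have A1: "((\<lambda>t. p (r * cis t) / (r * cis t) ^ Suc n * r * \<i> * cis t) has_integral ((2 * pi * \<i>) / fact n * (deriv ^^ n) p 0)) {0..2*pi}"
    using A unfolding circlepath_def by (subst (asm) has_contour_integral_part_circlepath_iff) auto
  have A2: "((\<lambda>t. P t * inverse (cis t) ^ n) has_integral (2 * pi * c * r^n)) {0..2*pi}"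
  proof -
    have "((\<lambda>t. (r^n / \<i>) * (p (r * cis t) / (r * cis t) ^ Suc n * r * \<i> * cis t)) has_integral ((r^n / \<i>) * ((2 * pi * \<i>) / fact n * (deriv ^^ n) p 0))) {0..2*pi}"
      by (rule has_integral_mult_right[OF A1])
    moreover have "(r^n / \<i>) * ((2 * pi * \<i>) / fact n * (deriv ^^ n) p 0) = 2 * pi * c * r^n"
      by (simp add: c_def field_simps)
    moreover have "(r^n / \<i>) * (p (r * cis t) / (r * cis t) ^ Suc n * r * \<i> * cis t) = P t * inverse (cis t) ^ n" for t
      using r by (simp add: P_def field_simps power_mult_distrib)
    ultimately show ?thesis by simp
  qed
  have B: "((\<lambda>u. p u * u ^ (n - 1)) has_contour_integral 0) (circlepath 0 r)"
    by (rule Cauchy_theorem_disc_simple[of _ 0 1]) (use r hol in \<open>auto intro!: holomorphic_intros\<close>)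
  have B1: "((\<lambda>t. p (r * cis t) * (r * cis t) ^ (n - 1) * r * \<i> * cis t) has_integral 0) {0..2*pi}"
    using B unfolding circlepath_def by (subst (asm) has_contour_integral_part_circlepath_iff) auto
  have B2: "((\<lambda>t. P t * cis t ^ n) has_integral 0) {0..2*pi}"
  proof -
    have "((\<lambda>t. (1 / (r^n * \<i>)) * (p (r * cis t) * (r * cis t) ^ (n - 1) * r * \<i> * cis t)) has_integral ((1 / (r^n * \<i>)) * 0)) {0..2*pi}"
      by (rule has_integral_mult_right[OF B1])
    moreover have "(1 / (r^n * \<i>)) * (p (r * cis t) * (r * cis t) ^ (n - 1) * r * \<i> * cis t) = P t * cis t ^ n" for t
    proof -
      have "(r * cis t) ^ (n - 1) * r * cis t = (r * cis t) ^ n"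
        using n by (metis mult.assoc power_minus_mult not_one_le_zero neq0_conv order.refl mult.commute)
      then show ?thesis using r by (simp add: P_def field_simps power_mult_distrib)
    qed
    ultimately show ?thesis by simp
  qed
  have B3: "((\<lambda>t. cnj (P t) * inverse (cis t) ^ n) has_integral 0) {0..2*pi}"
  proof -
    have "(cnj \<circ> (\<lambda>t. P t * cis t ^ n) has_integral cnj 0) {0..2*pi}"
      using B2 by (subst has_integral_cnj)
    moreover have "cnj (cis t) = inverse (cis t)" for t by (simp add: cis_cnj cis_inverse)
    ultimately show ?thesis by (simp add: o_def)
  qed
  have C: "((\<lambda>u. p u / (u - 0) ^ Suc 0) has_contour_integral ((2 * pi * \<i>) / fact 0 * (deriv ^^ 0) p 0)) (circlepath 0 r)"
    by (rule Cauchy_has_contour_integral_higher_derivative_circlepath[OF cont holr c0])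
  have C1: "((\<lambda>t. p (r * cis t) / (r * cis t) ^ Suc 0 * r * \<i> * cis t) has_integral ((2 * pi * \<i>) / fact 0 * (deriv ^^ 0) p 0)) {0..2*pi}"
    using C unfolding circlepath_def by (subst (asm) has_contour_integral_part_circlepath_iff) auto
  have C2: "((\<lambda>t. P t) has_integral (2 * pi * p 0)) {0..2*pi}"
  proof -
    have "p (r * cis t) / (r * cis t) ^ Suc 0 * r * \<i> * cis t = \<i> * P t" for t
      using r by (simp add: P_def field_simps)
    then have "((\<lambda>t. \<i> * P t) has_integral (\<i> * (2 * pi * p 0))) {0..2*pi}"
      using C1 by (simp add: mult.commute mult.left_commute)
    then have "((\<lambda>t. (-\<i>) * (\<i> * P t)) has_integral ((-\<i>) * (\<i> * (2 * pi * p 0)))) {0..2*pi}"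
      by (rule has_integral_mult_right)
    then show ?thesis by simp
  qed
  have C3: "((\<lambda>t. 2 * Re (P t)) has_integral (2 * (2 * pi * Re (p 0)))) {0..2*pi}"
    using has_integral_mult_right[OF has_integral_Re[OF C2], of 2] by simp
  have D: "((\<lambda>t. (P t + cnj (P t)) * inverse (cis t) ^ n) has_integral (2 * pi * c * r^n)) {0..2*pi}"
    using has_integral_add[OF A2 B3] by (simp add: algebra_simps)
  have Pp: "Re (P t) > 0" for t
    using pos r by (simp add: P_def norm_mult)
  have "norm (integral {0..2*pi} (\<lambda>t. (P t + cnj (P t)) * inverse (cis t) ^ n)) \<le> integral {0..2*pi} (\<lambda>t. 2 * Re (P t))"
  proof (rule integral_norm_bound_integral)
    show "(\<lambda>t. (P t + cnj (P t)) * inverse (cis t) ^ n) integrable_on {0..2 * pi}" using D by blast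
    show "(\<lambda>t. 2 * Re (P t)) integrable_on {0..2 * pi}" using C3 by blast
    fix t show "norm ((P t + cnj (P t)) * inverse (cis t) ^ n) \<le> 2 * Re (P t)"
      using Pp[of t] by (simp add: complex_add_cnj norm_mult norm_power)
  qed
  then have "norm (2 * pi * c * r^n) \<le> 2 * (2 * pi * Re (p 0))"
    using integral_unique[OF D] integral_unique[OF C3] by simp
  then have "2 * pi * (cmod c * r^n) \<le> 2 * pi * (2 * Re (p 0))"
    using r by (simp add: norm_mult norm_power)
  then show ?thesis unfolding c_def by (simp add: mult.commute)
qed

lemma cara:
  fixes p :: "complex \<Rightarrow> complex"
  assumes hol: "p holomorphic_on ball 0 1" and pos: "\<forall>z\<in>ball 0 1. Re (p z) > 0"
    and n: "n \<ge> 1"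
  shows "cmod ((deriv ^^ n) p 0 / fact n) \<le> 2 * Re (p 0)"
proof -
  let ?X = "cmod ((deriv ^^ n) p 0 / fact n)"
  have "((\<lambda>r. ?X * r^n) \<longlongrightarrow> ?X * 1^n) (at_left 1)"
    by (intro tendsto_intros)
  moreover have "eventually (\<lambda>r. ?X * r^n \<le> 2 * Re (p 0)) (at_left (1::real))"
    using eventually_at_left_real[of 0 1] cara_r[OF hol pos n] by (auto elim!: eventually_mono)
  ultimately show ?thesis
    by (intro tendsto_le[OF _ tendsto_const]) auto
qed


lemma binom_ex: "\<exists>W. (1 + Y) ^ k = 1 + of_nat k * Y + Y^2 * (W :: 'a :: comm_ring_1)"
proof (induction k)
  case 0 then show ?case by (intro exI[of _ 0]) simp
next
  case (Suc k)
  then obtain W where W: "(1 + Y) ^ k = 1 + of_nat k * Y + Y^2 * W" by blast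
  show ?case
    by (intro exI[of _ "W + of_nat k + Y * W"]) (simp add: W algebra_simps power2_eq_square)
qed

lemma comp_coeff:
  fixes F G :: "complex fps"
  assumes m: "m \<ge> 1" and F0: "F$0 = 0" and F1: "F$1 = 1"
    and Fz: "\<forall>k. k \<noteq> 1 \<and> \<not>(\<exists>j\<ge>1. k = m*j+1) \<longrightarrow> F$k = 0"
    and GF: "G oo F = fps_X"
  shows "G$0 = 0 \<and> G$1 = 1 \<and> G$(2*m+1) = of_nat (m+1) * (F$(m+1))^2 - F$(2*m+1)"
proof -
  obtain m' where m': "m = Suc m'" using m by (cases m) auto
  define a where "a = F$(m+1)"
  define c where "c = F$(2*m+1)"
  define e where "e = of_nat (m+1) * a^2 - c"
  define A where "A = fps_const a"
  define C where "C = fps_const c"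
  define E where "E = fps_const e"
  define X :: "complex fps" where "X = fps_X"
  define Z where "Z = X ^ m'"
  define K1 where "K1 = fps_shift (2*m+2) F"
  have XZ1: "X^(m+1) = X^2 * Z" and XZ2: "X^(2*m+1) = X^3 * Z^2" and XZ3: "X^(2*m+2) = X^4 * Z^2"
  proof -
    have "m+1 = 2 + m'" "2*m+1 = 3 + m'*2" "2*m+2 = 4 + m'*2" using m' by simp_all
    then show "X^(m+1) = X^2 * Z" "X^(2*m+1) = X^3 * Z^2" "X^(2*m+2) = X^4 * Z^2"
      unfolding Z_def by (simp_all only: power_add power_mult)
  qed
  have Fdec: "F = X + A * X^(m+1) + C * X^(2*m+1) + X^(2*m+2) * K1"
  proof (rule fps_ext)
    fix n
    show "F $ n = (X + A * X^(m+1) + C * X^(2*m+1) + X^(2*m+2) * K1) $ n"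
    proof (cases "n < 2*m+2")
      case False
      then have "Suc (Suc (n - 2)) = n" by simp
      then show ?thesis using m False by (simp add: X_def A_def C_def K1_def fps_X_power_mult_nth del: power_Suc)
    next
      case True
      have "F $ n = (if n = 1 then 1 else if n = m+1 then a else if n = 2*m+1 then c else 0)"
      proof -
        have "F$n = 0" if "n \<noteq> 1" "n \<noteq> m+1" "n \<noteq> 2*m+1"
        proof -
          have "\<not>(\<exists>j\<ge>1. n = m*j+1)"
          proof
            assume "\<exists>j\<ge>1. n = m*j+1"
            then obtain j where j: "j \<ge> 1" "n = m*j+1" by blast
            have "j < 3"
            proof (rule ccontr)
              assume "\<not> j < 3" then have "m*j \<ge> m*3" by simp
              then show False using True j m by linarith
            qed
            then have "j = 1 \<or> j = 2" using j by auto
            then show False using that j by auto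
          qed
          then show ?thesis using Fz that by blast
        qed
        then show ?thesis using F0 F1 a_def c_def by auto
      qed
      then show ?thesis using True m
        by (auto simp: X_def A_def C_def fps_X_power_mult_nth simp del: power_Suc)
    qed
  qed
  define V2 where "V2 = C + X * K1"
  define V where "V = A + X * Z * V2"
  define Y where "Y = X * Z * V"
  have FU: "F = X * (1 + Y)"
    unfolding Fdec XZ1 XZ2 XZ3 Y_def V_def V2_def by algebra
  obtain W where W: "(1 + Y) ^ (m+1) = 1 + of_nat (m+1) * Y + Y^2 * W" using binom_ex by blast
  obtain W' where W': "(1 + Y) ^ (2*m+1) = 1 + of_nat (2*m+1) * Y + Y^2 * W'" using binom_ex by blast
  have Fp1: "F^(m+1) = X^2 * Z * (1 + of_nat (m+1) * Y + Y^2 * W)"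
    using FU W XZ1 by (simp only: power_mult_distrib)
  have Fp2: "F^(2*m+1) = X^3 * Z^2 * (1 + of_nat (2*m+1) * Y + Y^2 * W')"
    using FU W' XZ2 by (simp only: power_mult_distrib)
  have Eeq: "E = of_nat (m+1) * A^2 - C"
    unfolding E_def e_def A_def C_def by (simp add: fps_of_nat[symmetric])
  define G0 where "G0 = X - A * X^(m+1) + E * X^(2*m+1)"
  have cmp: "(fps_const k * X^j) oo F = fps_const k * F^j" for k j
    unfolding fps_compose_mult_distrib[OF F0] X_def fps_X_power_compose[OF F0] by simp
  have G0F: "G0 oo F = F - A * F^(m+1) + E * F^(2*m+1)"
    unfolding G0_def A_def E_def fps_compose_add_distrib fps_compose_sub_distrib cmp
    using F0 by (simp add: X_def)
  define Q where "Q = K1 - A * of_nat (m+1) * Z * V2 - A * Z * V^2 * W + E * of_nat (2*m+1) * Z * V + E * X * Z^2 * V^2 * W'"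
  have G0F2: "G0 oo F = X + X^(2*m+2) * Q"
    unfolding G0F Fp1 Fp2 XZ3
    apply (subst FU)
    unfolding Eeq Q_def Y_def V_def V2_def
    by algebra
  define Fi where "Fi = fps_inv F"
  have Fi0: "Fi $ 0 = 0" by (simp add: Fi_def fps_inv_def)
  have FFi: "F oo Fi = fps_X" unfolding Fi_def by (rule fps_inv_right) (use F0 F1 in auto)
  have GFi: "G = Fi"
  proof -
    have "G = G oo (F oo Fi)" by (simp add: FFi)
    also have "\<dots> = (G oo F) oo Fi" by (rule fps_compose_assoc[OF Fi0 F0])
    also have "\<dots> = Fi" using GF Fi0 by simp
    finally show ?thesis .
  qed
  have G0Fi: "G0 = Fi + Fi^(2*m+2) * (Q oo Fi)"
  proof -
    have "G0 = G0 oo (F oo Fi)" by (simp add: FFi)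
    also have "\<dots> = (G0 oo F) oo Fi" by (rule fps_compose_assoc[OF Fi0 F0])
    also have "\<dots> = Fi + Fi^(2*m+2) * (Q oo Fi)"
      unfolding G0F2 fps_compose_add_distrib fps_compose_mult_distrib[OF Fi0] X_def
        fps_X_power_compose[OF Fi0] fps_X_fps_compose_startby0[OF Fi0] ..
    finally show ?thesis .
  qed
  have small: "(Fi^(2*m+2) * R) $ i = 0" if "i < 2*m+2" for i R
    unfolding fps_mult_nth using startsby_zero_power_prefix[OF Fi0, of "2*m+2"] that
    by (intro sum.neutral) auto
  have eqc: "G $ i = G0 $ i" if "i < 2*m+2" for i
    using small[OF that, of "Q oo Fi"] unfolding G0Fi GFi by simp
  have "G0 $ 0 = 0" "G0 $ 1 = 1" "G0 $ (2*m+1) = e"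
    using m by (simp_all add: G0_def X_def A_def E_def del: power_Suc)
  then show ?thesis using eqc[of 0] eqc[of 1] eqc[of "2*m+1"] by (simp add: e_def a_def c_def)
qed


lemma coef_expansion:
  assumes "h has_fps_expansion F" shows "coef h k = F $ k"
  using fps_nth_fps_expansion[OF assms] by (simp add: coef_def)

lemma gen:
  fixes h :: "complex \<Rightarrow> complex"
  assumes m: "m \<ge> 1" and hol: "h holomorphic_on ball 0 1" and h0: "coef h 0 = 0" and h1: "coef h 1 = 1"
    and pos: "\<forall>z\<in>ball 0 1. Re (J_fun m \<tau> lam 0 0 h z) > \<beta>" and tau: "\<tau> \<noteq> 0"
    and n: "n \<ge> 1" "m dvd n"
  shows "cmod (of_real (1 + real n * lam) * coef h (n+1) / \<tau>) \<le> 2 * (1 - \<beta>)"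
proof -
  define HF where "HF = fps_expansion h 0"
  have hasF: "h has_fps_expansion HF" unfolding HF_def
    by (rule has_fps_expansion_fps_expansion[OF _ _ hol]) auto
  have radF: "fps_conv_radius HF \<ge> 1"
    unfolding HF_def using conv_radius_fps_expansion[of h 0 1] hol by (simp add: one_ereal_def)
  define S where "S k \<longleftrightarrow> k = 1 \<or> (\<exists>j\<ge>1. k = m*j+1)" for k
  define H where "H = Abs_fps (\<lambda>k. if S k then coef h k else 0)"
  have Hn: "H $ k = (if S k then coef h k else 0)" for k by (simp add: H_def)
  have H0: "H $ 0 = 0" and H1: "H $ 1 = 1" using h1 by (simp_all add: Hn S_def)
  have H1': "H $ Suc 0 = 1" using H1 by simp
  have radH: "fps_conv_radius H \<ge> 1"
    unfolding fps_conv_radius_def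
  proof (rule conv_radius_geI_ex')
    fix r :: real assume r: "0 < r" "ereal r < 1"
    have "summable (\<lambda>k. norm (HF $ k * of_real r ^ k))"
      by (rule norm_summable_fps) (use less_le_trans[OF r(2) radF] r(1) in simp)
    then show "summable (\<lambda>k. H $ k * of_real r ^ k)"
      by (rule summable_comparison_test'[where N=0])
         (auto simp: Hn coef_expansion[OF hasF] norm_mult)
  qed
  have ballH: "ball (0::complex) 1 \<subseteq> eball 0 (fps_conv_radius H)"
  proof -
    have hx: "ereal (cmod x) < fps_conv_radius H" if "cmod x < 1" for x :: complex
      using less_le_trans[of "ereal (cmod x)" 1 "fps_conv_radius H"] that radH by (simp add: one_ereal_def)
    show ?thesis
      using hx by (auto simp: dist_norm subset_iff)
  qed
  have R1: "ruscheweyh m 0 h z = eval_fps H z" if z: "z \<in> ball 0 1" for z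
  proof -
    have s: "(\<lambda>k. H $ k * z ^ k) sums eval_fps H z"
      by (rule sums_eval_fps) (use z ballH in auto)
    define H' where "H' k = H $ k * z ^ k - (if k = 1 then z else 0)" for k
    have s2: "H' sums (eval_fps H z - z)"
      unfolding H'_def by (intro sums_diff s sums_single)
    define g where "g k = m * Suc k + 1" for k
    have sm: "strict_mono g" unfolding g_def strict_mono_Suc_iff using m by simp
    have zero: "H' k = 0" if "k \<notin> range g" for k
    proof (cases "k = 1")
      case True then show ?thesis using H1 by (simp add: H'_def)
    next
      case False
      have "\<not> (\<exists>j\<ge>1. k = m*j+1)"
      proof
        assume "\<exists>j\<ge>1. k = m*j+1"
        then obtain j where "j \<ge> 1" "k = m*j+1" by blast
        then have "k = g (j - 1)" by (simp add: g_def)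
        then show False using that by auto
      qed
      then have "\<not> S k" using False by (simp add: S_def)
      then show ?thesis using False by (simp add: H'_def Hn)
    qed
    have "(\<lambda>k. H' (g k)) sums (eval_fps H z - z)"
      using sums_mono_reindex[OF sm, of H'] zero s2 by blast
    moreover have "H' (g k) = of_nat ((0 + Suc k) choose (Suc k)) * coef h (m * Suc k + 1) * z ^ (m * Suc k + 1)" for k
    proof -
      have "g k \<noteq> 1" using m by (simp add: g_def)
      moreover have "S (g k)" unfolding S_def g_def by (intro disjI2 exI[of _ "Suc k"]) simp
      ultimately show ?thesis using m by (simp add: H'_def Hn g_def)
    qed
    ultimately have "(\<lambda>k. of_nat ((0 + Suc k) choose (Suc k)) * coef h (m * Suc k + 1) * z ^ (m * Suc k + 1)) sums (eval_fps H z - z)"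
      by simp
    then show ?thesis unfolding ruscheweyh_def by (simp add: sums_iff)
  qed
  define Qf where "Qf z = (if z = 0 then 1 else eval_fps H z / z)" for z
  define Jh where "Jh z = 1 + 1/\<tau> * ((1 - of_real lam) * Qf z + of_real lam * deriv (eval_fps H) z - 1)" for z
  have JJ: "J_fun m \<tau> lam 0 0 h z = Jh z" if z: "z \<in> ball 0 1" for z
  proof -
    have d: "deriv (ruscheweyh m 0 h) z = deriv (eval_fps H) z"
    proof (rule deriv_cong_ev)
      show "\<forall>\<^sub>F x in nhds z. ruscheweyh m 0 h x = eval_fps H x"
        using eventually_nhds_in_open[OF open_ball z] by (rule eventually_mono) (use R1 in auto)
    qed simp
    show ?thesis by (simp add: J_fun_def Let_def Jh_def Qf_def R1[OF z] d)
  qed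
  have holE: "eval_fps H holomorphic_on ball 0 1" by (rule holomorphic_on_eval_fps[OF ballH])
  have E0: "eval_fps H 0 = 0" by (simp add: eval_fps_at_0 H0)
  have rad0: "fps_conv_radius H > 0" using radH by (simp add: less_le_trans[OF _ radH])
  have dE0: "deriv (eval_fps H) 0 = 1"
    using eval_fps_deriv[of 0 H] rad0 H1 by (simp add: eval_fps_at_0 zero_ereal_def)
  have holQ: "Qf holomorphic_on ball 0 1"
  proof -
    have "(\<lambda>z. if z = 0 then deriv (eval_fps H) 0 else (eval_fps H z - eval_fps H 0) / (z - 0)) holomorphic_on ball 0 1"
      by (rule pole_lemma[OF holE]) simp
    moreover have "(\<lambda>z. if z = 0 then deriv (eval_fps H) 0 else (eval_fps H z - eval_fps H 0) / (z - 0)) = Qf"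
      by (auto simp: Qf_def E0 dE0)
    ultimately show ?thesis by simp
  qed
  have holD: "deriv (eval_fps H) holomorphic_on ball 0 1" by (rule holomorphic_deriv[OF holE open_ball])
  define p where "p z = Jh z - of_real \<beta>" for z
  have holp: "p holomorphic_on ball 0 1"
    unfolding p_def Jh_def by (intro holomorphic_intros holQ holD)
  have posp: "\<forall>z\<in>ball 0 1. Re (p z) > 0"
    using pos JJ by (simp add: p_def)
  have cp: "cmod ((deriv ^^ n) p 0 / fact n) \<le> 2 * Re (p 0)"
    by (rule cara[OF holp posp n(1)])
  have p0: "p 0 = 1 - of_real \<beta>"
    using tau by (simp add: p_def Jh_def Qf_def dE0 field_simps)
  have eH: "eval_fps H has_fps_expansion H" by (rule eval_fps_has_fps_expansion[OF rad0])
  have sdH: "1 \<le> subdegree H"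
  proof (rule subdegree_geI)
    show "H \<noteq> 0" using H1 by auto
  qed (use H0 in auto)
  have eQ: "Qf has_fps_expansion fps_shift 1 H"
  proof -
    have "(\<lambda>x. if x = 0 then 1 else eval_fps H x / x ^ 1) has_fps_expansion fps_shift 1 H"
      by (rule has_fps_expansion_shift[OF eH sdH]) (simp add: H1')
    moreover have "(\<lambda>x. if x = 0 then 1 else eval_fps H x / x ^ 1) = Qf" by (auto simp: Qf_def)
    ultimately show ?thesis by simp
  qed
  have eD: "deriv (eval_fps H) has_fps_expansion fps_deriv H" by (rule has_fps_expansion_deriv[OF eH])
  define P where "P = 1 + fps_const (1/\<tau>) * (fps_const (1 - of_real lam) * fps_shift 1 H + fps_const (of_real lam) * fps_deriv H - 1) - fps_const (of_real \<beta>)"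
  have ep: "p has_fps_expansion P"
    unfolding p_def Jh_def P_def by (intro fps_expansion_intros eQ eD)
  have Pn: "P $ n = 1/\<tau> * ((1 - of_real lam) * H $ (n+1) + of_real lam * (of_nat n + 1) * H $ (n+1))"
    using n by (simp add: P_def)
  have Sn: "S (n+1)"
  proof -
    obtain j where j: "n = m * j" using n(2) by blast
    then have "j \<ge> 1" using n(1) by (cases j) auto
    then show ?thesis unfolding S_def using j by blast
  qed
  have "P $ n = of_real (1 + real n * lam) * coef h (n+1) / \<tau>"
    unfolding Pn using Sn by (simp add: Hn field_simps)
  moreover have "P $ n = (deriv ^^ n) p 0 / fact n" by (rule fps_nth_fps_expansion[OF ep])
  ultimately show ?thesis using cp p0 by simp
qed


theorem corollary2:
  fixes m :: nat and \<tau> :: complex and lam \<beta> :: real and f :: "complex \<Rightarrow> complex"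
  assumes "m \<ge> 1" and "lam \<ge> 0" and "0 \<le> \<beta>" and "\<beta> < 1" and "\<tau> \<noteq> 0"
    and "Theta_Sigma m \<tau> lam 0 0 \<beta> f"
  shows "cmod (coef f (m + 1)) \<le> min (2 * cmod \<tau> * (1 - \<beta>) / (1 + m * lam))
            (2 * sqrt (cmod \<tau> * (1 - \<beta>) / ((m + 1) * (1 + 2 * m * lam))))
     \<and> cmod (coef f (2 * m + 1)) \<le> 2 * cmod \<tau> * (1 - \<beta>) / (1 + 2 * m * lam)"
proof -
  note m = assms(1) and lam = assms(2) and tau = assms(5)
  have holf: "f holomorphic_on ball 0 1" and cf0: "coef f 0 = 0" and cf1: "coef f 1 = 1"
    and cfz: "\<forall>n. n \<noteq> 1 \<and> \<not> (\<exists>k\<ge>1. n = m * k + 1) \<longrightarrow> coef f n = 0"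
    and posf: "\<forall>z\<in>ball 0 1. Re (J_fun m \<tau> lam 0 0 f z) > \<beta>"
    using assms(6) by (auto simp: Theta_Sigma_def Sigma_m_def in_A_def)
  obtain g where ig: "inv_extension f g" and posg: "\<forall>w\<in>ball 0 1. Re (J_fun m \<tau> lam 0 0 g w) > \<beta>"
    using assms(6) by (auto simp: Theta_Sigma_def)
  have holg: "g holomorphic_on ball 0 1" and gf: "\<forall>z\<in>ball 0 1. f z \<in> ball 0 1 \<longrightarrow> g (f z) = z"
    using ig by (auto simp: inv_extension_def)
  define F where "F = fps_expansion f 0"
  define G where "G = fps_expansion g 0"
  have eF: "f has_fps_expansion F" unfolding F_def
    by (rule has_fps_expansion_fps_expansion[OF _ _ holf]) auto
  have eG: "g has_fps_expansion G" unfolding G_def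
    by (rule has_fps_expansion_fps_expansion[OF _ _ holg]) auto
  have Fc: "F $ k = coef f k" for k using coef_expansion[OF eF] by simp
  have Gc: "G $ k = coef g k" for k using coef_expansion[OF eG] by simp
  have F0: "F $ 0 = 0" and F1: "F $ 1 = 1" using cf0 cf1 by (simp_all add: Fc)
  have Fz: "\<forall>k. k \<noteq> 1 \<and> \<not>(\<exists>j\<ge>1. k = m*j+1) \<longrightarrow> F$k = 0" using cfz by (simp add: Fc)
  have f0: "f 0 = 0" using cf0 by (simp add: coef_def)
  have ev: "eventually (\<lambda>x. (g \<circ> f) x = x) (nhds 0)"
  proof -
    have "continuous_on (ball 0 1) f" using holf holomorphic_on_imp_continuous_on by blast
    then have op: "open (ball 0 1 \<inter> f -` ball 0 1)"
      using continuous_on_open_vimage[of "ball 0 1" f] by (auto simp: Int_commute)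
    have "0 \<in> ball 0 1 \<inter> f -` ball (0::complex) 1" using f0 by simp
    from eventually_nhds_in_open[OF op this] show ?thesis
      by (rule eventually_mono) (use gf in auto)
  qed
  have e1: "(g \<circ> f) has_fps_expansion (G oo F)"
    by (rule has_fps_expansion_compose[OF eG eF F0])
  have e2: "(g \<circ> f) has_fps_expansion fps_X"
    using has_fps_expansion_cong[OF ev refl] has_fps_expansion_fps_X by blast
  have GF: "G oo F = fps_X"
    using fps_nth_fps_expansion[OF e1] fps_nth_fps_expansion[OF e2] by (simp add: fps_eq_iff)
  from comp_coeff[OF m F0 F1 Fz GF]
  have G0: "G$0 = 0" and G1: "G$1 = 1" and G2: "G$(2*m+1) = of_nat (m+1) * (F$(m+1))^2 - F$(2*m+1)"
    by auto
  have cg0: "coef g 0 = 0" and cg1: "coef g 1 = 1" using G0 G1 by (simp_all add: Gc)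
  define a where "a = coef f (m+1)"
  define c where "c = coef f (2*m+1)"
  define b where "b = coef g (2*m+1)"
  have bac: "b = of_nat (m+1) * a^2 - c" using G2 by (simp add: Gc Fc a_def b_def c_def)
  define x1 where "x1 = 1 + real m * lam"
  define x2 where "x2 = 1 + 2 * real m * lam"
  have x1: "x1 > 0" and x2: "x2 > 0" using lam by (simp_all add: x1_def x2_def add_pos_nonneg)
  have nt: "cmod \<tau> > 0" using tau by simp
  have r2: "real (2*m) = 2 * real m" by simp
  have B1: "cmod (of_real x1 * a / \<tau>) \<le> 2 * (1 - \<beta>)"
    using gen[OF m holf cf0 cf1 posf tau, of m] m by (simp add: a_def x1_def)
  have B2: "cmod (of_real x2 * c / \<tau>) \<le> 2 * (1 - \<beta>)"
    using gen[OF m holf cf0 cf1 posf tau, of "2*m"] m unfolding x2_def r2[symmetric] by (simp add: c_def)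
  have B3: "cmod (of_real x2 * b / \<tau>) \<le> 2 * (1 - \<beta>)"
    using gen[OF m holg cg0 cg1 posg tau, of "2*m"] m unfolding x2_def r2[symmetric] by (simp add: b_def)
  have nrm: "cmod (of_real x * y / \<tau>) = x * cmod y / cmod \<tau>" if "x > 0" for x y
    using that by (simp only: norm_mult norm_divide norm_of_real abs_of_pos)
  have a1: "cmod a * x1 \<le> 2 * (1 - \<beta>) * cmod \<tau>"
    using B1 nt unfolding nrm[OF x1] by (simp add: divide_le_eq mult.commute)
  have c1: "cmod c * x2 \<le> 2 * (1 - \<beta>) * cmod \<tau>"
    using B2 nt unfolding nrm[OF x2] by (simp add: divide_le_eq mult.commute)
  have b1: "cmod b * x2 \<le> 2 * (1 - \<beta>) * cmod \<tau>"
    using B3 nt unfolding nrm[OF x2] by (simp add: divide_le_eq mult.commute)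
  have "of_nat (m+1) * a^2 = b + c" using bac by simp
  then have "real (m+1) * cmod a ^ 2 = cmod (b + c)"
    by (metis norm_mult norm_of_nat norm_power)
  also have "\<dots> \<le> cmod b + cmod c" by (rule norm_triangle_ineq)
  finally have "real (m+1) * cmod a ^ 2 * x2 \<le> (cmod b + cmod c) * x2"
    using x2 by (simp add: mult_right_mono)
  also have "\<dots> \<le> 4 * (1 - \<beta>) * cmod \<tau>" using b1 c1 by (simp add: algebra_simps)
  finally have sq: "real (m+1) * cmod a ^ 2 * x2 \<le> 4 * (1 - \<beta>) * cmod \<tau>" .
  define K where "K = cmod \<tau> * (1 - \<beta>) / ((real m + 1) * x2)"
  have pz: "(real m + 1) * x2 > 0" using x2 by simp
  have "cmod a ^ 2 \<le> 4 * K"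
    unfolding K_def using sq pz by (simp add: le_divide_eq algebra_simps)
  then have "cmod a \<le> sqrt (4 * K)" by (rule real_le_rsqrt)
  also have "sqrt (4 * K) = 2 * sqrt K" by (simp add: real_sqrt_mult)
  finally have A2: "cmod a \<le> 2 * sqrt K" .
  have A1: "cmod a \<le> 2 * cmod \<tau> * (1 - \<beta>) / x1"
    using a1 x1 by (simp add: le_divide_eq mult.commute mult.left_commute)
  have C1: "cmod c \<le> 2 * cmod \<tau> * (1 - \<beta>) / x2"
    using c1 x2 by (simp add: le_divide_eq mult.commute mult.left_commute)
  show ?thesis using A1 A2 C1 unfolding a_def c_def K_def x1_def x2_def by (simp add: add.commute)
qed
end
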